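(* Let $q\ge2$. For every small $\epsilon\in(0,1)$ and every $0\le\kappa<\frac{q-1}{q}$, with probability at least $1-q^{-n}$, a random code $\mathcal{C}\subseteq\Sigma_q^n$ of rate $R=1-H_q(\kappa)-\epsilon$ is list decodable against any $\kappa$ fraction of deletions (i.e., $\kappa n$ deletions) with list size $O(1/\epsilon)$, for all sufficiently large $n$.
   Context: $\Sigma_q$ is a finite alphabet of size $q$. A code $\mathcal{C}\subseteq\Sigma_q^n$ is list decodable against $\kappa n$ deletions with list size $L$ if for every word $\mathbf r$ there are at most $L$ codewords $\mathbf c\in\mathcal{C}$ such that $\mathbf r$ can be obtained from $\mathbf c$ by at most $\kappa n$ single-symbol deletions. The rate is $\log_q|\mathcal{C}|/n$; a random code of rate $R$ is a uniformly random subset of $\Sigma_q^n$ of size $q^{Rn}$. $H_q(x)=x\log_q(q-1)-x\log_qx-(1-x)\log_q(1-x)$ for $0<x<1$, $H_q(0)=H_q(1)=0$. *)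

theory Defs
  imports Complex_Main "HOL-Library.Sublist"
begin

definition Hq :: "nat \<Rightarrow> real \<Rightarrow> real" where
  "Hq q x = (if 0 < x \<and> x < 1 then
      x * log q (real q - 1) - x * log q x - (1 - x) * log q (1 - x) else 0)"

definition words :: "nat \<Rightarrow> nat \<Rightarrow> nat list set" where
  "words q n = {w. length w = n \<and> set w \<subseteq> {0..<q}}"

definition del_from :: "real \<Rightarrow> nat list \<Rightarrow> nat list \<Rightarrow> bool" where
  "del_from d c r \<longleftrightarrow> subseq r c \<and> real (length c - length r) \<le> d"

definition list_decodable_del :: "nat list set \<Rightarrow> real \<Rightarrow> nat \<Rightarrow> bool" where
  "list_decodable_del C d L \<longleftrightarrow> (\<forall>r. card {c \<in> C. del_from d c r} \<le> L)"

definition random_code_prob :: "nat \<Rightarrow> nat \<Rightarrow> nat \<Rightarrow> (nat list set \<Rightarrow> bool) \<Rightarrow> real" where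
  "random_code_prob q n M P =
     real (card {C. C \<subseteq> words q n \<and> card C = M \<and> P C}) / real (card (words q n) choose M)"

end

theory Submission
  imports Defs
begin


definition sup_set :: "nat \<Rightarrow> nat \<Rightarrow> nat list \<Rightarrow> nat list set" where
  "sup_set q n r = {c \<in> words q n. subseq r c}"

lemma finite_words: "finite (words q n)"
  unfolding words_def using finite_lists_length_eq[of "{0..<q}" n] by (simp add: conj_commute)

lemma card_words: "card (words q n) = q ^ n"
  unfolding words_def using card_lists_length_eq[of "{0..<q}" n] by (simp add: conj_commute)

lemma words_Suc: "words q (Suc n) = (\<Union>x\<in>{0..<q}. Cons x ` words q n)"
  unfolding words_def by (auto simp: length_Suc_conv)

lemma sup_set_Suc:
  "sup_set q (Suc n) (a # r) \<subseteq> Cons a ` sup_set q n r \<union> (\<Union>x\<in>{0..<q}-{a}. Cons x ` sup_set q n (a # r))"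
  unfolding sup_set_def words_Suc by (auto split: if_splits)

lemma subseq_set: "subseq xs ys \<Longrightarrow> set xs \<subseteq> set ys"
  by (induction rule: list_emb.induct) auto

lemma sup_set_big: "a \<ge> q \<Longrightarrow> sup_set q n (a # r) = {}"
proof -
  { fix c assume c: "set c \<subseteq> {0..<q}" "subseq (a # r) c"
    then have "a \<in> set c" using subseq_set[OF c(2)] by simp
    with c(1) have "a < q" by auto }
  then show "a \<ge> q \<Longrightarrow> ?thesis" unfolding sup_set_def words_def by force
qed

lemma sup_card:
  fixes lam :: real
  assumes lam: "0 < lam" "lam \<le> 1" and q: "q \<ge> 1"
  shows "length r \<le> n \<Longrightarrow> real (card (sup_set q n r)) \<le> (1/lam)^(n - length r) * (1 + (real q - 1) * lam)^n"
proof (induction n arbitrary: r)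
  case 0
  then have "sup_set q 0 r \<subseteq> {[]}" unfolding sup_set_def words_def by auto
  then have "card (sup_set q 0 r) \<le> card {[]::nat list}" by (intro card_mono) auto
  then show ?case by simp
next
  case (Suc n)
  show ?case
  proof (cases r)
    case Nil
    have "sup_set q (Suc n) r = words q (Suc n)" unfolding sup_set_def Nil by auto
    then have "real (card (sup_set q (Suc n) r)) = real q ^ Suc n" by (simp add: card_words)
    also have "\<dots> \<le> (1/lam + (real q - 1)) ^ Suc n"
      using lam by (intro power_mono) (auto simp: field_simps)
    also have "\<dots> = (1/lam)^(Suc n - length r) * (1 + (real q - 1) * lam)^Suc n"
      using lam by (simp add: Nil power_mult_distrib[symmetric] field_simps)
    finally show ?thesis .
  next
    case (Cons a r')
    show ?thesis
    proof (cases "a < q")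
      case False
      have "0 \<le> (1/lam)^(Suc n - length r) * (1 + (real q - 1) * lam)^Suc n"
        using lam q by (intro mult_nonneg_nonneg zero_le_power) auto
      then show ?thesis using sup_set_big[of q a] False Cons by simp
    next
      case True
      define A where "A = 1 + (real q - 1) * lam"
      define j where "j = n - length r'"
      have A0: "A \<ge> 0" using lam q unfolding A_def by auto
      have fin: "finite (sup_set q m s)" for m s unfolding sup_set_def using finite_words by auto
      have "card (sup_set q (Suc n) r) \<le> card (Cons a ` sup_set q n r' \<union> (\<Union>x\<in>{0..<q}-{a}. Cons x ` sup_set q n (a # r')))"
        unfolding Cons by (rule card_mono) (use fin sup_set_Suc in auto)
      also have "\<dots> \<le> card (Cons a ` sup_set q n r') + card (\<Union>x\<in>{0..<q}-{a}. Cons x ` sup_set q n (a # r'))"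
        by (rule card_Un_le)
      also have "\<dots> \<le> card (sup_set q n r') + (\<Sum>x\<in>{0..<q}-{a}. card (Cons x ` sup_set q n (a # r')))"
        by (intro add_mono card_image_le card_UN_le) (auto simp: fin)
      also have "\<dots> \<le> card (sup_set q n r') + (q - 1) * card (sup_set q n (a # r'))"
        using True by (simp add: card_image)
      finally have c0: "card (sup_set q (Suc n) r) \<le> card (sup_set q n r') + (q - 1) * card (sup_set q n (a # r'))" .
      have qq: "real (q - 1) = real q - 1" using q by (simp add: of_nat_diff)
      have c: "real (card (sup_set q (Suc n) r)) \<le> real (card (sup_set q n r')) + (real q - 1) * real (card (sup_set q n (a # r')))"
        unfolding qq[symmetric] using c0 by (simp only: of_nat_add[symmetric] of_nat_mult[symmetric] of_nat_le_iff)
      have h1: "real (card (sup_set q n r')) \<le> (1/lam)^j * A^n"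
        using Suc.IH[of r'] Suc.prems Cons unfolding A_def j_def by simp
      have h2: "(real q - 1) * real (card (sup_set q n (a # r'))) \<le> (real q - 1) * ((1/lam)^j * A^n * lam)"
      proof (cases "length (a # r') \<le> n")
        case True
        then have jj: "j = Suc (n - length (a#r'))" unfolding j_def by simp
        have "real (card (sup_set q n (a # r'))) \<le> (1/lam)^(n - length (a#r')) * A^n"
          using Suc.IH[OF True] unfolding A_def by simp
        also have "\<dots> = (1/lam)^j * A^n * lam" unfolding jj using lam by simp
        finally have X: "real (card (sup_set q n (a # r'))) \<le> (1/lam)^j * A^n * lam" .
        show ?thesis
          using X q by (intro mult_left_mono) auto
      next
        case False
        then have "sup_set q n (a # r') = {}" by (auto simp: sup_set_def words_def)
        moreover have "0 \<le> (real q - 1) * ((1/lam)^j * A^n * lam)"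
          using lam q A0 by (intro mult_nonneg_nonneg zero_le_power) auto
        ultimately show ?thesis by simp
      qed
      have "real (card (sup_set q (Suc n) r)) \<le> (1/lam)^j * A^n + (real q - 1) * ((1/lam)^j * A^n * lam)"
        using c h1 h2 by linarith
      also have "\<dots> = (1/lam)^j * A^n * (1 + (real q - 1) * lam)"
        by (simp add: ring_distribs)
      also have "\<dots> = (1/lam)^(Suc n - length r) * (1 + (real q - 1) * lam)^Suc n"
        unfolding A_def j_def Cons by simp
      finally show ?thesis .
    qed
  qed
qed



lemma choose_le_pow: "(a choose k) \<le> a ^ k"
  by (cases "k \<le> a") (auto simp: binomial_le_pow binomial_eq_0)

lemma choose_ratio:
  assumes "M \<le> N"
  shows "real (M choose k) * real N ^ k \<le> real (N choose k) * real M ^ k"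
proof (induction k)
  case 0 then show ?case by simp
next
  case (Suc k)
  have key: "real (Suc k) * real (m choose Suc k) = real (m - k) * real (m choose k)" for m
  proof -
    have "Suc k * (m choose Suc k) = (m - k) * (m choose k)"
      using binomial_absorption[of k m] binomial_absorb_comp[of m k] by simp
    then show ?thesis by (metis of_nat_mult)
  qed
  have m: "real (M - k) * real N \<le> real (N - k) * real M"
  proof (cases "k \<le> M")
    case True
    then have "real (M - k) = real M - real k" "real (N - k) = real N - real k"
      using assms by (auto simp: of_nat_diff)
    moreover have "real M * real k \<le> real N * real k" using assms by (intro mult_right_mono) auto
    ultimately show ?thesis by (simp add: algebra_simps)
  next
    case False then show ?thesis by simp
  qed
  have "real (Suc k) * (real (M choose Suc k) * real N ^ Suc k)
      = (real (Suc k) * real (M choose Suc k)) * real N ^ Suc k" by (simp only: mult.assoc)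
  also have "\<dots> = (real (M - k) * real (M choose k)) * real N ^ Suc k" by (simp only: key)
  also have "\<dots> = (real (M choose k) * real N ^ k) * (real (M - k) * real N)"
    by (simp add: mult_ac)
  also have "\<dots> \<le> (real (N choose k) * real M ^ k) * (real (N - k) * real M)"
    by (intro mult_mono Suc.IH m) auto
  also have "\<dots> = (real (N - k) * real (N choose k)) * real M ^ Suc k"
    by (simp add: mult_ac)
  also have "\<dots> = (real (Suc k) * real (N choose Suc k)) * real M ^ Suc k" by (simp only: key)
  also have "\<dots> = real (Suc k) * (real (N choose Suc k) * real M ^ Suc k)" by (simp only: mult.assoc)
  finally show ?case by (simp only: mult_le_cancel_left_pos of_nat_0_less_iff zero_less_Suc)
qed

lemma count_supersets:
  assumes W: "finite W" and T: "T \<subseteq> W" "card T = k" and kM: "k \<le> M"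
  shows "card {C. C \<subseteq> W \<and> card C = M \<and> T \<subseteq> C} = (card W - k) choose (M - k)"
proof -
  have fT: "finite T" using T W finite_subset by blast
  have "bij_betw (\<lambda>B. B \<union> T) {B. B \<subseteq> W - T \<and> card B = M - k} {C. C \<subseteq> W \<and> card C = M \<and> T \<subseteq> C}"
  proof (rule bij_betw_byWitness[where f' = "\<lambda>C. C - T"])
    show "\<forall>B\<in>{B. B \<subseteq> W - T \<and> card B = M - k}. B \<union> T - T = B" by auto
    show "\<forall>C\<in>{C. C \<subseteq> W \<and> card C = M \<and> T \<subseteq> C}. C - T \<union> T = C" by auto
    show "(\<lambda>B. B \<union> T) ` {B. B \<subseteq> W - T \<and> card B = M - k} \<subseteq> {C. C \<subseteq> W \<and> card C = M \<and> T \<subseteq> C}"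
    proof (rule image_subsetI)
      fix B assume "B \<in> {B. B \<subseteq> W - T \<and> card B = M - k}"
      then have B: "B \<subseteq> W - T" "card B = M - k" by simp_all
      have fB: "finite B" using B W finite_subset by blast
      have "card (B \<union> T) = card B + card T"
        by (rule card_Un_disjoint) (use fB fT B in auto)
      then have "card (B \<union> T) = M" using B T kM by simp
      moreover have "B \<union> T \<subseteq> W" using B T by blast
      ultimately show "B \<union> T \<in> {C. C \<subseteq> W \<and> card C = M \<and> T \<subseteq> C}" by simp
    qed
    show "(\<lambda>C. C - T) ` {C. C \<subseteq> W \<and> card C = M \<and> T \<subseteq> C} \<subseteq> {B. B \<subseteq> W - T \<and> card B = M - k}"
    proof (rule image_subsetI)
      fix C assume "C \<in> {C. C \<subseteq> W \<and> card C = M \<and> T \<subseteq> C}"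
      then have C: "C \<subseteq> W" "card C = M" "T \<subseteq> C" by simp_all
      have "card (C - T) = M - k" using card_Diff_subset[OF fT C(3)] C T by simp
      moreover have "C - T \<subseteq> W - T" using C by blast
      ultimately show "C - T \<in> {B. B \<subseteq> W - T \<and> card B = M - k}" by simp
    qed
  qed
  then have "card {C. C \<subseteq> W \<and> card C = M \<and> T \<subseteq> C} = card {B. B \<subseteq> W - T \<and> card B = M - k}"
    by (rule bij_betw_same_card[THEN sym])
  also have "\<dots> = card (W - T) choose (M - k)" using W by (simp add: n_subsets)
  also have "card (W - T) = card W - k" using T fT by (simp add: card_Diff_subset)
  finally show ?thesis .
qed

lemma superset_bound:
  assumes W: "finite W" and T: "T \<subseteq> W" "card T = k" and MN: "M \<le> card W" and N0: "card W > 0"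
  shows "real (card {C. C \<subseteq> W \<and> card C = M \<and> T \<subseteq> C}) \<le> real (card W choose M) * (real M / real (card W)) ^ k"
proof (cases "k \<le> M")
  case False
  have no: False if "C \<subseteq> W" "card C = M" "T \<subseteq> C" for C
  proof -
    have "card T \<le> card C" using W that by (meson card_mono finite_subset)
    then show False using False T that by simp
  qed
  have e: "{C. C \<subseteq> W \<and> card C = M \<and> T \<subseteq> C} = {}" using no by blast
  have "0 \<le> real (card W choose M) * (real M / real (card W)) ^ k" by simp
  then show ?thesis unfolding e by simp
next
  case True
  define N where "N = card W"
  have kN: "k \<le> N" using True MN N_def by simp
  have pos: "real (N choose k) > 0" using kN by simp
  have cm: "real (N choose M) * real (M choose k) = real (N choose k) * real ((N - k) choose (M - k))"
    using choose_mult[OF True MN[folded N_def]] by (metis of_nat_mult)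
  have r: "real (M choose k) * real N ^ k \<le> real (N choose k) * real M ^ k"
    using choose_ratio MN N_def by simp
  have "real ((N - k) choose (M - k)) = real (N choose M) * real (M choose k) / real (N choose k)"
    using cm pos by (simp add: field_simps)
  also have "\<dots> \<le> real (N choose M) * (real M / real N) ^ k"
  proof -
    have "real (M choose k) / real (N choose k) \<le> (real M / real N) ^ k"
      using r pos N0 N_def by (simp add: field_simps power_divide)
    then have "real (N choose M) * (real (M choose k) / real (N choose k)) \<le> real (N choose M) * (real M / real N) ^ k"
      by (rule mult_left_mono) simp
    then show ?thesis by (simp only: times_divide_eq_right)
  qed
  finally show ?thesis using count_supersets[OF W T True] N_def by simp
qed



lemma Hq_nonneg:
  assumes q: "q \<ge> 2" and k: "0 \<le> \<kappa>" "\<kappa> < 1"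
  shows "Hq q \<kappa> \<ge> 0"
proof (cases "\<kappa> = 0")
  case True then show ?thesis by (simp add: Hq_def)
next
  case False
  then have k0: "0 < \<kappa>" using k by simp
  have lq: "ln (real q) > 0" using q by simp
  have a: "ln (real q - 1) \<ge> 0" using q by simp
  have b: "ln \<kappa> < 0" using k0 k by simp
  have c: "ln (1 - \<kappa>) < 0" using k0 k by simp
  have "0 \<le> (\<kappa> * ln (real q - 1) - \<kappa> * ln \<kappa> - (1 - \<kappa>) * ln (1 - \<kappa>)) / ln (real q)"
  proof (rule divide_nonneg_pos[OF _ lq])
    have t1: "\<kappa> * ln (real q - 1) \<ge> 0" using a k0 by simp
    have t2: "\<kappa> * ln \<kappa> \<le> 0" using b k0 by (intro mult_nonneg_nonpos) auto
    have t3: "(1 - \<kappa>) * ln (1 - \<kappa>) \<le> 0" using c k by (intro mult_nonneg_nonpos) auto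
    show "0 \<le> \<kappa> * ln (real q - 1) - \<kappa> * ln \<kappa> - (1 - \<kappa>) * ln (1 - \<kappa>)"
      using t1 t2 t3 by linarith
  qed
  also have "\<dots> = Hq q \<kappa>"
    using k0 k lq by (simp add: Hq_def log_def diff_divide_distrib)
  finally show ?thesis .
qed

lemma entropy_card:
  assumes q: "q \<ge> 2" and k: "0 \<le> \<kappa>" "\<kappa> < (real q - 1) / real q"
    and r: "length r \<le> n" "real (n - length r) \<le> \<kappa> * real n"
  shows "real (card (sup_set q n r)) \<le> real q powr (Hq q \<kappa> * real n)"
proof (cases "\<kappa> = 0")
  case True
  then have "length r = n" using r by simp
  then have "sup_set q n r \<subseteq> {r}" unfolding sup_set_def words_def
    using subseq_same_length by fastforce
  then have "card (sup_set q n r) \<le> card {r}" by (intro card_mono) auto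
  then show ?thesis using True q by (simp add: Hq_def)
next
  case False
  then have k0: "0 < \<kappa>" using k by simp
  have qpos: "real q > 0" using q by simp
  have kq: "\<kappa> * real q < real q - 1" using k qpos by (simp add: field_simps)
  have k1: "\<kappa> < 1"
  proof (rule ccontr)
    assume "\<not> \<kappa> < 1"
    then have "1 * real q \<le> \<kappa> * real q" using qpos by (intro mult_right_mono) auto
    then show False using kq by linarith
  qed
  define lam where "lam = \<kappa> / ((real q - 1) * (1 - \<kappa>))"
  have d: "(real q - 1) * (1 - \<kappa>) > 0" using q k1 by simp
  have lam0: "lam > 0" unfolding lam_def using k0 d by simp
  have lam1: "lam \<le> 1" unfolding lam_def using d kq by (simp add: field_simps)
  have A: "1 + (real q - 1) * lam = 1 / (1 - \<kappa>)"
  proof -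
    have q1: "real q - 1 \<noteq> 0" using q by simp
    have "(real q - 1) * lam = \<kappa> / (1 - \<kappa>)" unfolding lam_def using q1 by simp
    moreover have "1 + \<kappa> / (1 - \<kappa>) = 1 / (1 - \<kappa>)" using k1 by (simp add: field_simps)
    ultimately show ?thesis by simp
  qed
  have il: "1 / lam \<ge> 1" using lam0 lam1 by simp
  have "real (card (sup_set q n r)) \<le> (1/lam)^(n - length r) * (1 + (real q - 1) * lam)^n"
    using sup_card[OF lam0 lam1, of q r n] q r by simp
  also have "\<dots> = (1/lam) powr real (n - length r) * (1 / (1 - \<kappa>)) powr real n"
    using lam0 k1 A by (simp add: powr_realpow)
  also have "\<dots> \<le> (1/lam) powr (\<kappa> * real n) * (1 / (1 - \<kappa>)) powr real n"
    using r il by (intro mult_right_mono powr_mono) auto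
  also have "\<dots> = real q powr (Hq q \<kappa> * real n)"
  proof -
    have l1: "ln (1/lam) = ln (real q - 1) + ln (1 - \<kappa>) - ln \<kappa>"
      unfolding lam_def using k0 k1 q d by (simp add: ln_div ln_mult)
    have l2: "ln (1 / (1 - \<kappa>)) = - ln (1 - \<kappa>)" using k1 by (simp add: ln_div)
    have lq: "ln (real q) > 0" using q by simp
    have h: "Hq q \<kappa> * ln (real q) = \<kappa> * ln (real q - 1) - \<kappa> * ln \<kappa> - (1 - \<kappa>) * ln (1 - \<kappa>)"
      using k0 k1 lq by (simp add: Hq_def log_def field_simps)
    have p1: "(1/lam) powr (\<kappa> * real n) = exp (\<kappa> * real n * ln (1/lam))"
      unfolding powr_def using lam0 by simp
    have p2: "(1 / (1 - \<kappa>)) powr real n = exp (real n * ln (1 / (1 - \<kappa>)))"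
      unfolding powr_def using k1 by simp
    have e: "\<kappa> * real n * ln (1/lam) + real n * ln (1 / (1 - \<kappa>)) = Hq q \<kappa> * real n * ln (real q)"
    proof -
      have "Hq q \<kappa> * real n * ln (real q) = real n * (Hq q \<kappa> * ln (real q))" by (simp only: mult_ac)
      also have "\<dots> = real n * (\<kappa> * ln (real q - 1) - \<kappa> * ln \<kappa> - (1 - \<kappa>) * ln (1 - \<kappa>))" by (simp only: h)
      finally show ?thesis unfolding l1 l2 by (simp add: algebra_simps)
    qed
    have "(1/lam) powr (\<kappa> * real n) * (1 / (1 - \<kappa>)) powr real n
        = exp (Hq q \<kappa> * real n * ln (real q))"
      unfolding p1 p2 e[symmetric] by (simp only: exp_add)
    also have "\<dots> = real q powr (Hq q \<kappa> * real n)" unfolding powr_def using qpos by simp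
    finally show ?thesis .
  qed
  finally show ?thesis .
qed



lemma main_bound:
  fixes q n :: nat and \<epsilon> \<kappa> :: real
  assumes q: "q \<ge> 2" and e: "0 < \<epsilon>" "\<epsilon> < 1" and k: "0 \<le> \<kappa>" "\<kappa> < (real q - 1) / real q"
  shows "random_code_prob q n (nat \<lfloor>real q powr ((1 - Hq q \<kappa> - \<epsilon>) * real n)\<rfloor>)
          (\<lambda>C. list_decodable_del C (\<kappa> * real n) (nat \<lfloor>3 / \<epsilon>\<rfloor>))
        \<ge> 1 - real q powr (- real n)"
proof -
  define H where "H = Hq q \<kappa>"
  define E where "E = real q powr ((1 - H - \<epsilon>) * real n)"
  define M where "M = nat \<lfloor>E\<rfloor>"
  define L where "L = nat \<lfloor>3 / \<epsilon>\<rfloor>"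
  define k where "k = Suc L"
  define W where "W = words q n"
  define NW where "NW = card W"
  define d where "d = \<kappa> * real n"
  define P where "P = (\<lambda>C. list_decodable_del C d L)"
  define B where "B = real q powr (H * real n)"
  define rho where "rho = real M / real NW"
  have qpos: "real q > 0" using q by simp
  have q1: "real q \<ge> 1" using q by simp
  have k1: "\<kappa> < 1"
  proof -
    have "(real q - 1) / real q \<le> 1" using qpos by simp
    then show ?thesis using k by linarith
  qed
  have H0: "H \<ge> 0" unfolding H_def using Hq_nonneg[OF q k(1) k1] .
  have finW: "finite W" unfolding W_def by (rule finite_words)
  have NW: "NW = q ^ n" unfolding NW_def W_def by (rule card_words)
  have NWr: "real NW = real q powr real n" using qpos NW by (simp add: powr_realpow)
  have NW0: "NW > 0" using NW q by simp
  have E0: "E \<ge> 0" unfolding E_def by simp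
  have ME: "real M \<le> E" unfolding M_def using E0 by simp
  have EN: "E \<le> real q powr real n"
    unfolding E_def
  proof (rule powr_mono[OF _ q1])
    have "(1 - H - \<epsilon>) \<le> 1" using H0 e by linarith
    then show "(1 - H - \<epsilon>) * real n \<le> real n" using mult_right_mono[of "1 - H - \<epsilon>" 1 "real n"] by simp
  qed
  have MN: "M \<le> NW" using ME EN NWr by (simp flip: of_nat_le_iff)
  define All where "All = {C. C \<subseteq> W \<and> card C = M}"
  define Good where "Good = {C. C \<subseteq> W \<and> card C = M \<and> P C}"
  define Bad where "Bad = {C. C \<subseteq> W \<and> card C = M \<and> \<not> P C}"
  define total where "total = NW choose M"
  have total_pos: "total > 0" unfolding total_def using MN by simp
  have finAll: "finite All" unfolding All_def using finW by simp
  have cardAll: "card All = total" unfolding All_def total_def NW_def using n_subsets[OF finW] by simp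
  have GB: "All = Good \<union> Bad" "Good \<inter> Bad = {}" unfolding All_def Good_def Bad_def by blast+
  have finG: "finite Good" "finite Bad" using finAll GB by auto
  have cardGB: "card Good + card Bad = total"
    using card_Un_disjoint[OF finG GB(2)] GB(1) cardAll by simp
  define R where "R = {r. set r \<subseteq> {0..<q} \<and> length r \<le> n \<and> real (n - length r) \<le> d}"
  define Ts where "Ts = (\<lambda>r. {T. T \<subseteq> sup_set q n r \<and> card T = k})"
  define Sp where "Sp = (\<lambda>T. {C. C \<subseteq> W \<and> card C = M \<and> T \<subseteq> C})"
  have finR: "finite R"
    by (rule finite_subset[OF _ finite_lists_length_le[of "{0..<q}" n]]) (auto simp: R_def)
  have cardR: "real (card R) \<le> real (Suc n) * real q ^ n"
  proof -
    have "card R \<le> card {xs. set xs \<subseteq> {0..<q} \<and> length xs \<le> n}"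
      by (rule card_mono[OF finite_lists_length_le]) (auto simp: R_def)
    also have "\<dots> = (\<Sum>i\<le>n. q ^ i)" using card_lists_length_le[of "{0..<q}" n] by simp
    also have "\<dots> \<le> (\<Sum>i\<le>n. q ^ n)" using q by (intro sum_mono power_increasing) auto
    also have "\<dots> = Suc n * q ^ n" by simp
    finally have "real (card R) \<le> real (Suc n * q ^ n)" by (simp only: of_nat_le_iff)
    then show ?thesis by (simp only: of_nat_mult of_nat_power)
  qed
  have finSup: "finite (sup_set q n r)" for r unfolding sup_set_def using finW W_def by simp
  have finTs: "finite (Ts r)" for r
    unfolding Ts_def by (rule finite_subset[of _ "Pow (sup_set q n r)"]) (use finSup in auto)
  have finSp: "finite (Sp T)" for T
    unfolding Sp_def by (rule finite_subset[of _ "Pow W"]) (use finW in auto)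
  have BadSub: "Bad \<subseteq> (\<Union>r\<in>R. \<Union>T\<in>Ts r. Sp T)"
  proof
    fix C assume "C \<in> Bad"
    then have C: "C \<subseteq> W" "card C = M" "\<not> P C" unfolding Bad_def by simp_all
    then obtain r where r: "\<not> card {c \<in> C. del_from d c r} \<le> L"
      unfolding P_def list_decodable_del_def by blast
    define X where "X = {c \<in> C. del_from d c r}"
    have cX: "k \<le> card X" using r unfolding X_def k_def by simp
    then obtain T where T: "T \<subseteq> X" "card T = k" "finite T" by (rule obtain_subset_with_card_n)
    have "X \<noteq> {}" using cX k_def by auto
    then obtain c where c: "c \<in> X" by blast
    then have cC: "c \<in> C" and sc: "subseq r c" and dc: "real (length c - length r) \<le> d"
      unfolding X_def del_from_def by simp_all
    have cW: "c \<in> W" using cC C(1) by blast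
    then have lc: "length c = n" "set c \<subseteq> {0..<q}" unfolding W_def words_def by simp_all
    have "set r \<subseteq> {0..<q}" using subseq_set[OF sc] lc(2) by blast
    moreover have "length r \<le> n" using list_emb_length[OF sc] lc(1) by simp
    ultimately have rR: "r \<in> R" unfolding R_def using dc lc(1) by simp
    have TS: "T \<subseteq> sup_set q n r"
    proof
      fix t assume "t \<in> T"
      then have "t \<in> X" using T by blast
      then have "t \<in> C" "subseq r t" unfolding X_def del_from_def by simp_all
      then show "t \<in> sup_set q n r" unfolding sup_set_def using C(1) W_def by blast
    qed
    have "T \<subseteq> C" using T(1) unfolding X_def by blast
    then have "C \<in> Sp T" unfolding Sp_def using C by simp
    moreover have "T \<in> Ts rr" if "rr = r" for rr unfolding Ts_def using TS T that by simp
    ultimately show "C \<in> (\<Union>r\<in>R. \<Union>T\<in>Ts r. Sp T)" using rR by blast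
  qed
  have rho_bound: "B * rho \<le> real q powr (- \<epsilon> * real n)"
  proof -
    have "B * rho \<le> B * (E / real NW)"
      unfolding rho_def using ME NW0 by (intro mult_left_mono divide_right_mono) (auto simp: B_def)
    also have "\<dots> = real q powr (H * real n + (1 - H - \<epsilon>) * real n - real n)"
      unfolding B_def E_def NWr using qpos by (simp add: powr_add powr_diff)
    also have "(H * real n + (1 - H - \<epsilon>) * real n - real n) = - \<epsilon> * real n"
      by (simp add: algebra_simps)
    finally show ?thesis .
  qed
  have ek: "\<epsilon> * real k \<ge> 3"
  proof -
    have "3 / \<epsilon> < real k" unfolding k_def L_def using e by linarith
    then show ?thesis using e by (simp add: field_simps)
  qed
  have pow_bound: "(B * rho) ^ k \<le> real q powr (- 3 * real n)"
  proof -
    have nn: "0 \<le> B * rho" unfolding B_def rho_def by simp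
    have "(B * rho) ^ k \<le> (real q powr (- \<epsilon> * real n)) ^ k" using rho_bound nn by (rule power_mono)
    also have "\<dots> = real q powr (- \<epsilon> * real n * real k)"
      using qpos by (simp add: powr_realpow[symmetric] powr_powr)
    also have "\<dots> \<le> real q powr (- 3 * real n)"
    proof (rule powr_mono[OF _ q1])
      have "3 * real n \<le> (\<epsilon> * real k) * real n" using ek by (intro mult_right_mono) auto
      then show "- \<epsilon> * real n * real k \<le> - 3 * real n" by (simp add: algebra_simps)
    qed
    finally show ?thesis .
  qed
  have per_r: "(\<Sum>T\<in>Ts r. real (card (Sp T))) \<le> B ^ k * rho ^ k * real total" if rR: "r \<in> R" for r
  proof -
    have "(\<Sum>T\<in>Ts r. real (card (Sp T))) \<le> (\<Sum>T\<in>Ts r. real total * rho ^ k)"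
    proof (rule sum_mono)
      fix T assume "T \<in> Ts r"
      then have T: "T \<subseteq> sup_set q n r" "card T = k" unfolding Ts_def by simp_all
      have "T \<subseteq> W" using T(1) unfolding sup_set_def W_def by blast
      from superset_bound[OF finW this T(2) MN[unfolded NW_def] NW0[unfolded NW_def]]
      show "real (card (Sp T)) \<le> real total * rho ^ k"
        unfolding Sp_def total_def rho_def NW_def .
    qed
    also have "\<dots> = real (card (Ts r)) * real total * rho ^ k" by simp
    also have "\<dots> \<le> B ^ k * real total * rho ^ k"
    proof (intro mult_right_mono)
      have "card (Ts r) = card (sup_set q n r) choose k"
        unfolding Ts_def using n_subsets[OF finSup] by simp
      also have "\<dots> \<le> card (sup_set q n r) ^ k" by (rule choose_le_pow)
      finally have "real (card (Ts r)) \<le> real (card (sup_set q n r) ^ k)" by (simp only: of_nat_le_iff)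
      then have "real (card (Ts r)) \<le> real (card (sup_set q n r)) ^ k" by (simp only: of_nat_power)
      also have "\<dots> \<le> B ^ k"
        unfolding B_def H_def
        using rR entropy_card[OF q k, of r n] by (intro power_mono) (auto simp: R_def d_def)
      finally show "real (card (Ts r)) \<le> B ^ k" .
    qed (auto simp: rho_def)
    finally show ?thesis by (simp add: mult_ac)
  qed
  have Bad_bound: "real (card Bad) \<le> real total * real q powr (- real n)"
  proof -
    have "card Bad \<le> card (\<Union>r\<in>R. \<Union>T\<in>Ts r. Sp T)"
      by (rule card_mono[OF _ BadSub]) (use finR finTs finSp in auto)
    also have "\<dots> \<le> (\<Sum>r\<in>R. card (\<Union>T\<in>Ts r. Sp T))" by (rule card_UN_le[OF finR])
    also have "\<dots> \<le> (\<Sum>r\<in>R. \<Sum>T\<in>Ts r. card (Sp T))" by (intro sum_mono card_UN_le finTs)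
    finally have "real (card Bad) \<le> real (\<Sum>r\<in>R. \<Sum>T\<in>Ts r. card (Sp T))"
      by (simp only: of_nat_le_iff)
    then have "real (card Bad) \<le> (\<Sum>r\<in>R. \<Sum>T\<in>Ts r. real (card (Sp T)))"
      by (simp only: of_nat_sum)
    also have "\<dots> \<le> (\<Sum>r\<in>R. B ^ k * rho ^ k * real total)" by (intro sum_mono per_r)
    also have "\<dots> = real (card R) * ((B * rho) ^ k) * real total" by (simp add: power_mult_distrib)
    also have "\<dots> \<le> (real (Suc n) * real q ^ n) * real q powr (- 3 * real n) * real total"
      by (intro mult_right_mono mult_mono cardR pow_bound) (auto simp: B_def rho_def)
    also have "\<dots> \<le> (real q ^ n * real q ^ n) * real q powr (- 3 * real n) * real total"
    proof -
      have "Suc n \<le> 2 ^ n" using less_exp[of n] by (simp only: Suc_le_eq)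
      also have "\<dots> \<le> q ^ n" using q by (intro power_mono) auto
      finally have "real (Suc n) \<le> real (q ^ n)" by (simp only: of_nat_le_iff)
      then have "real (Suc n) \<le> real q ^ n" by (simp only: of_nat_power)
      then show ?thesis by (intro mult_right_mono) auto
    qed
    also have "\<dots> = real q powr (real n + real n + - 3 * real n) * real total"
    proof -
      have pw: "real q ^ n = real q powr real n" using qpos by (simp add: powr_realpow)
      show ?thesis unfolding pw by (simp only: powr_add)
    qed
    also have "real n + real n + - 3 * real n = - real n" by simp
    finally show ?thesis by (simp add: mult.commute)
  qed
  have "random_code_prob q n M P = real (card Good) / real total"
    unfolding random_code_prob_def Good_def total_def NW_def W_def by simp
  also have "\<dots> = (real total - real (card Bad)) / real total"
    using cardGB by (simp flip: of_nat_add)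
  also have "\<dots> \<ge> 1 - real q powr (- real n)"
    using Bad_bound total_pos by (simp add: field_simps)
  finally show ?thesis unfolding P_def M_def E_def H_def L_def d_def .
qed


theorem mainTheorem7:
  fixes q :: nat
  assumes "q \<ge> 2"
  shows "\<exists>c > 0. \<forall>\<epsilon> \<kappa>. 0 < \<epsilon> \<and> \<epsilon> < 1 \<and> 0 \<le> \<kappa> \<and> \<kappa> < (real q - 1) / real q \<longrightarrow>
     (\<exists>N. \<forall>n \<ge> N.
        random_code_prob q n (nat \<lfloor>real q powr ((1 - Hq q \<kappa> - \<epsilon>) * real n)\<rfloor>)
          (\<lambda>C. list_decodable_del C (\<kappa> * real n) (nat \<lfloor>c / \<epsilon>\<rfloor>))
        \<ge> 1 - real q powr (- real n))"
proof (rule exI[of _ "3::real"], intro conjI allI impI)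
  show "(3::real) > 0" by simp
next
  fix \<epsilon> \<kappa> :: real
  assume h: "0 < \<epsilon> \<and> \<epsilon> < 1 \<and> 0 \<le> \<kappa> \<and> \<kappa> < (real q - 1) / real q"
  show "\<exists>N. \<forall>n \<ge> N.
        random_code_prob q n (nat \<lfloor>real q powr ((1 - Hq q \<kappa> - \<epsilon>) * real n)\<rfloor>)
          (\<lambda>C. list_decodable_del C (\<kappa> * real n) (nat \<lfloor>3 / \<epsilon>\<rfloor>))
        \<ge> 1 - real q powr (- real n)"
    using main_bound[OF assms] h by blast
qed

end
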